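(* Let $G=(V,E,w)$ be a graph with positive edge weights, let $e\in E$, and let $L^{\mathrm{down}}=\widetilde\partial^{T}\widetilde\partial$ be the down Laplacian of $G$. Then $$ w_e\, B_e^{2} = \big((L^{\mathrm{down}})^{+}\big)_{ee} = \big\|1_e^{T}\widetilde\partial^{+}\big\|^{2}, $$ where $1_e^{T}\widetilde\partial^{+}$ is the row of $\widetilde\partial^{+}$ corresponding to $e$.
   Context: $G=(V,E,w)$ is an undirected graph with $n=|V|$ vertices, $m=|E|$ edges and positive weights $w_e$. Each edge $e=\{s,t\}$ is given an arbitrary fixed orientation $(s,t)$. The boundary (signed incidence) matrix $\partial\in\mathbb{R}^{n\times m}$ has column $\partial 1_e=1_s-1_t$ for $e=(s,t)$, where $1_x$ denotes the indicator vector of a vertex or edge $x$. $W\in\mathbb{R}^{m\times m}$ is the diagonal matrix of edge weights, $\widetilde\partial=\partial W^{1/2}$, and the graph Laplacian is $L=\partial W\partial^{T}=\widetilde\partial\widetilde\partial^{T}$ (equivalently $D-A$ with $D$ the weighted degree matrix and $A$ the weighted adjacency matrix). $M^{+}$ denotes the Moore–Penrose pseudoinverse, and $L^{2+}=(L^{+})^2$. The down Laplacian is $L^{\mathrm{down}}=\widetilde\partial^{T}\widetilde\partial=W^{1/2}\partial^{T}\partial W^{1/2}\in\mathbb{R}^{m\times m}$. The biharmonic distance between vertices $s,t$ is $B_{st}=\sqrt{(1_s-1_t)^{T}L^{2+}(1_s-1_t)}$, and for an edge $e=\{s,t\}$, $B_e:=B_{st}$. *)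

theory Defs
  imports "HOL-Analysis.Analysis"
begin

definition pinv :: "real^'n^'m \<Rightarrow> real^'m^'n" where
  "pinv A = (THE X. A ** X ** A = A \<and> X ** A ** X = X \<and>
                    transpose (A ** X) = A ** X \<and> transpose (X ** A) = X ** A)"

definition ind :: "'a::finite \<Rightarrow> real^'a" where
  "ind x = axis x 1"

definition boundary :: "('e::finite \<Rightarrow> 'v::finite) \<Rightarrow> ('e \<Rightarrow> 'v) \<Rightarrow> real^'e^'v" where
  "boundary src tgt = (\<chi> v e. (if v = src e then 1 else 0) - (if v = tgt e then 1 else 0))"

definition wdiag_sqrt :: "('e::finite \<Rightarrow> real) \<Rightarrow> real^'e^'e" where
  "wdiag_sqrt w = (\<chi> i j. if i = j then sqrt (w i) else 0)"

definition dtilde :: "('e::finite \<Rightarrow> 'v::finite) \<Rightarrow> ('e \<Rightarrow> 'v) \<Rightarrow> ('e \<Rightarrow> real) \<Rightarrow> real^'e^'v" where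
  "dtilde src tgt w = boundary src tgt ** wdiag_sqrt w"

definition laplacian :: "('e::finite \<Rightarrow> 'v::finite) \<Rightarrow> ('e \<Rightarrow> 'v) \<Rightarrow> ('e \<Rightarrow> real) \<Rightarrow> real^'v^'v" where
  "laplacian src tgt w = dtilde src tgt w ** transpose (dtilde src tgt w)"

definition down_laplacian :: "('e::finite \<Rightarrow> 'v::finite) \<Rightarrow> ('e \<Rightarrow> 'v) \<Rightarrow> ('e \<Rightarrow> real) \<Rightarrow> real^'e^'e" where
  "down_laplacian src tgt w = transpose (dtilde src tgt w) ** dtilde src tgt w"

definition biharmonic :: "('e::finite \<Rightarrow> 'v) \<Rightarrow> ('e \<Rightarrow> 'v) \<Rightarrow> ('e \<Rightarrow> real) \<Rightarrow> 'v::finite \<Rightarrow> 'v \<Rightarrow> real" where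
  "biharmonic src tgt w s t =
     (let Lp = pinv (laplacian src tgt w); d = ind s - ind t in sqrt (d \<bullet> ((Lp ** Lp) *v d)))"

end

theory Submission
  imports Defs
begin

lemma proj_exists:
  fixes S :: "'a::euclidean_space set"
  assumes "subspace S"
  obtains p where "linear p" "\<And>y. p y \<in> S" "\<And>y s. s \<in> S \<Longrightarrow> inner (y - p y) s = 0"
proof -
  obtain B where B: "B \<subseteq> S" "pairwise orthogonal B" "\<And>x. x \<in> B \<Longrightarrow> norm x = 1"
     "independent B" "span B = S"
    using orthonormal_basis_subspace[OF assms] by metis
  have fin: "finite B" using B(4) independent_imp_finite by blast
  define p where "p y = (\<Sum>b\<in>B. inner y b *\<^sub>R b)" for y
  have "linear p"
    by (rule linearI) (simp_all add: p_def inner_add_left scaleR_add_left sum.distrib scaleR_sum_right)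
  moreover have "p y \<in> S" for y
    unfolding p_def using B(1) assms
    by (auto intro!: subspace_sum subspace_mul)
  moreover have "inner (y - p y) s = 0" if s: "s \<in> S" for y s
  proof -
    have "orthogonal (y - p y) b0" if b0: "b0 \<in> B" for b0
    proof -
      have "inner (p y) b0 = (\<Sum>b\<in>B. inner y b * inner b b0)"
        by (simp add: p_def inner_sum_left)
      also have "\<dots> = (\<Sum>b\<in>B. if b = b0 then inner y b0 else 0)"
      proof (rule sum.cong)
        fix b assume "b \<in> B"
        then show "inner y b * inner b b0 = (if b = b0 then inner y b0 else 0)"
          using B(2,3) b0 unfolding pairwise_def orthogonal_def
          by (auto simp: dot_square_norm)
      qed simp
      also have "\<dots> = inner y b0" using fin b0 by simp
      finally show ?thesis by (simp add: orthogonal_def inner_diff_left)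
    qed
    then have "orthogonal (y - p y) s"
      using orthogonal_to_span[of s B] s B(5) by blast
    then show ?thesis by (simp add: orthogonal_def)
  qed
  ultimately show ?thesis using that by blast
qed


definition penrose :: "real^'n^'m \<Rightarrow> real^'m^'n \<Rightarrow> bool" where
  "penrose A X \<longleftrightarrow> A ** X ** A = A \<and> X ** A ** X = X \<and>
                    transpose (A ** X) = A ** X \<and> transpose (X ** A) = X ** A"

lemma inner_mv_transpose:
  fixes A :: "real^'n^'m"
  shows "inner (A *v x) y = inner x (transpose A *v y)"
  by (metis dot_lmul_matrix inner_commute transpose_matrix_vector)

lemma sym_from_inner:
  fixes M :: "real^'n^'n"
  assumes "\<And>x y. inner (M *v x) y = inner x (M *v y)"
  shows "transpose M = M"
proof -
  have "adjoint (\<lambda>x. M *v x) = (\<lambda>x. M *v x)"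
    by (rule adjoint_unique) (use assms in blast)
  then have "(\<lambda>x. transpose M *v x) = (\<lambda>x. M *v x)"
    by (simp add: adjoint_matrix)
  then show ?thesis by (metis matrix_eq)
qed

lemma proj_fix:
  fixes S :: "'a::euclidean_space set"
  assumes "subspace S" "\<And>y. p y \<in> S" "\<And>y s. s \<in> S \<Longrightarrow> inner (y - p y) s = 0" "s \<in> S"
  shows "p s = s"
proof -
  have "s - p s \<in> S" using assms by (simp add: subspace_diff)
  then have "inner (s - p s) (s - p s) = 0" using assms(3) by blast
  then show ?thesis by simp
qed

lemma proj_sym:
  fixes S :: "'a::euclidean_space set"
  assumes "\<And>y. p y \<in> S" "\<And>y s. s \<in> S \<Longrightarrow> inner (y - p y) s = 0"
  shows "inner (p x) y = inner x (p y)"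
proof -
  have "inner (p x) y = inner (p x) (p y) + inner (y - p y) (p x)"
    by (simp add: inner_diff_left inner_diff_right inner_commute)
  also have "\<dots> = inner (p x) (p y)" using assms by simp
  also have "\<dots> = inner (p x) (p y) + inner (x - p x) (p y)" using assms by simp
  also have "\<dots> = inner x (p y)" by (simp add: inner_diff_left)
  finally show ?thesis .
qed

lemma penrose_exists:
  fixes A :: "real^'n^'m"
  shows "\<exists>X. penrose A X"
proof -
  define C where "C = range (\<lambda>y. transpose A *v y)"
  define R where "R = range (\<lambda>x. A *v x)"
  have sC: "subspace C" unfolding C_def by (rule linear_subspace_image) (auto intro: subspace_UNIV)
  have sR: "subspace R" unfolding R_def by (rule linear_subspace_image) (auto intro: subspace_UNIV)
  obtain p where p: "linear p" "\<And>y. p y \<in> R" "\<And>y s. s \<in> R \<Longrightarrow> inner (y - p y) s = 0"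
    using proj_exists[OF sR] by blast
  obtain q where q: "linear q" "\<And>y. q y \<in> C" "\<And>y s. s \<in> C \<Longrightarrow> inner (y - q y) s = 0"
    using proj_exists[OF sC] by blast
  have null: "A *v z = 0" if "\<And>c. c \<in> C \<Longrightarrow> inner z c = 0" for z
  proof -
    have "inner (A *v z) (A *v z) = inner z (transpose A *v (A *v z))"
      by (rule inner_mv_transpose)
    also have "\<dots> = 0" using that unfolding C_def by blast
    finally show ?thesis by simp
  qed
  have Aq: "A *v q v = A *v v" for v
  proof -
    have "A *v (v - q v) = 0" using null q(3) by blast
    then show ?thesis by (simp add: matrix_vector_mult_diff_distrib)
  qed
  have inj: "inj_on (\<lambda>x. A *v x) C"
  proof (rule inj_onI)
    fix x x' assume xx: "x \<in> C" "x' \<in> C" "A *v x = A *v x'"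
    have d: "x - x' \<in> C" using sC xx by (simp add: subspace_diff)
    have "inner (x - x') c = 0" if cC: "c \<in> C" for c
    proof -
      obtain y where "c = transpose A *v y" using cC unfolding C_def by blast
      then have "inner (x - x') c = inner (A *v (x - x')) y"
        by (metis dot_lmul_matrix inner_commute transpose_matrix_vector)
      also have "\<dots> = 0" using xx by (simp add: matrix_vector_mult_diff_distrib)
      finally show ?thesis .
    qed
    then have "inner (x - x') (x - x') = 0" using d by blast
    then show "x = x'" by simp
  qed
  obtain g where g: "g ` UNIV \<subseteq> C" "linear g" "\<forall>v\<in>C. g (A *v v) = v"
    using linear_exists_left_inverse_on[OF matrix_vector_mul_linear sC inj] by blast
  define X where "X y = g (p y)" for y
  have linX: "linear X" unfolding X_def using linear_compose[OF p(1) g(2)] by (simp add: o_def)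
  define Xm where "Xm = matrix X"
  have Xm: "Xm *v y = X y" for y unfolding Xm_def using linX by (simp add: matrix_works linear_matrix_vector_mul_eq)
  have XC: "X y \<in> C" for y unfolding X_def using g(1) by blast
  have gA: "g (A *v v) = q v" for v
    using g(3) q(2) Aq by metis
  have F1: "A *v X y = p y" for y
  proof -
    obtain v where "p y = A *v v" using p(2) unfolding R_def by blast
    then show ?thesis unfolding X_def using gA Aq by simp
  qed
  have F3: "X (A *v v) = q v" for v
  proof -
    have "p (A *v v) = A *v v" using proj_fix[OF sR p(2,3)] unfolding R_def by blast
    then show ?thesis unfolding X_def using gA by simp
  qed
  have "penrose A Xm"
    unfolding penrose_def
  proof (intro conjI)
    show "A ** Xm ** A = A"
      by (rule matrix_eq[THEN iffD2]) (simp add: matrix_vector_mul_assoc[symmetric] Xm F3 Aq)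
    show "Xm ** A ** Xm = Xm"
      by (rule matrix_eq[THEN iffD2]) (simp add: matrix_vector_mul_assoc[symmetric] Xm F3 proj_fix[OF sC q(2,3)] XC)
    show "transpose (A ** Xm) = A ** Xm"
      by (rule sym_from_inner) (simp add: matrix_vector_mul_assoc[symmetric] Xm F1 proj_sym[OF p(2,3)])
    show "transpose (Xm ** A) = Xm ** A"
      by (rule sym_from_inner) (simp add: matrix_vector_mul_assoc[symmetric] Xm F3 proj_sym[OF q(2,3)])
  qed
  then show ?thesis by blast
qed


lemma penrose_unique:
  fixes A :: "real^'n^'m"
  assumes "penrose A X" "penrose A Y"
  shows "X = Y"
proof -
  have a1: "A ** X ** A = A" "X ** A ** X = X" "transpose X ** transpose A = A ** X" "transpose A ** transpose X = X ** A"
    using assms(1) unfolding penrose_def by (auto simp: matrix_transpose_mul)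
  have b1: "A ** Y ** A = A" "Y ** A ** Y = Y" "transpose Y ** transpose A = A ** Y" "transpose A ** transpose Y = Y ** A"
    using assms(2) unfolding penrose_def by (auto simp: matrix_transpose_mul)
  have L1: "transpose A = transpose A ** A ** Y"
  proof -
    have "transpose A = transpose (A ** Y ** A)" using b1 by simp
    also have "\<dots> = transpose A ** (transpose Y ** transpose A)" by (simp add: matrix_transpose_mul matrix_mul_assoc)
    also have "\<dots> = transpose A ** A ** Y" using b1 by (simp add: matrix_mul_assoc)
    finally show ?thesis .
  qed
  have L2: "transpose A = X ** A ** transpose A"
  proof -
    have "transpose A = transpose (A ** X ** A)" using a1 by simp
    also have "\<dots> = (transpose A ** transpose X) ** transpose A" by (simp add: matrix_transpose_mul matrix_mul_assoc)
    also have "\<dots> = X ** A ** transpose A" using a1 by (simp add: matrix_mul_assoc)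
    finally show ?thesis .
  qed
  have "X = X ** (A ** X)" using a1 by (simp add: matrix_mul_assoc)
  also have "\<dots> = X ** (transpose X ** transpose A)" using a1 by simp
  also have "\<dots> = X ** (transpose X ** (transpose A ** A ** Y))" using L1 by simp
  also have "\<dots> = X ** ((transpose X ** transpose A) ** A ** Y)" by (simp add: matrix_mul_assoc)
  also have "\<dots> = X ** A ** Y" using a1 by (simp add: matrix_mul_assoc)
  finally have X: "X = X ** A ** Y" .
  have "Y = (Y ** A) ** Y" using b1 by (simp add: matrix_mul_assoc)
  also have "\<dots> = (transpose A ** transpose Y) ** Y" using b1 by simp
  also have "\<dots> = (X ** A ** transpose A ** transpose Y) ** Y" using L2 by simp
  also have "\<dots> = X ** A ** (transpose A ** transpose Y) ** Y" by (simp add: matrix_mul_assoc)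
  also have "\<dots> = X ** A ** Y" using b1 by (metis matrix_mul_assoc)
  finally show ?thesis using X by simp
qed

lemma pinv_penrose:
  fixes A :: "real^'n^'m"
  shows "penrose A (pinv A)"
proof -
  have "\<exists>!X. penrose A X" using penrose_exists penrose_unique by blast
  then have "penrose A (THE X. penrose A X)" by (rule theI')
  then show ?thesis unfolding pinv_def penrose_def by simp
qed

lemma pinv_eqI:
  fixes A :: "real^'n^'m"
  shows "penrose A X \<Longrightarrow> pinv A = X"
  using pinv_penrose penrose_unique by blast


lemma pre2: "a ** b = (c::real^'a^'b) \<Longrightarrow> (z::real^'b^'c) ** a ** b = z ** c"
  by (metis matrix_mul_assoc)
lemma pre3: "a ** b ** c = (d::real^'a^'b) \<Longrightarrow> (z::real^'b^'c) ** a ** b ** c = z ** d"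
  by (metis matrix_mul_assoc)

lemma pinv_facts:
  fixes D :: "real^'e^'v"
  defines "P \<equiv> pinv D"
  shows "pinv (transpose D ** D) = P ** transpose P"
    and "pinv (D ** transpose D) = transpose P ** P"
    and "transpose D ** (transpose P ** P ** (transpose P ** P)) ** D = P ** transpose P"
proof -
  have f: "D ** P ** D = D" "P ** D ** P = P" "transpose P ** transpose D = D ** P" "transpose D ** transpose P = P ** D"
    using pinv_penrose[of D] unfolding penrose_def P_def by (auto simp: matrix_transpose_mul)
  note g = f(1,2)[THEN pre3] f(3,4)[THEN pre2]
  note h = f g
  have f5: "transpose D ** D ** P = transpose D" 
    by (metis f(1,3,4) matrix_mul_assoc matrix_transpose_mul)
  have f6: "transpose P ** P ** D = transpose P"
    by (metis f(2,3,4) matrix_mul_assoc matrix_transpose_mul)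
  have f7: "P ** D ** transpose D = transpose D"
    by (metis f(1,3,4) matrix_mul_assoc matrix_transpose_mul)
  have f8: "D ** P ** transpose P = transpose P"
    by (metis f(2,3,4) matrix_mul_assoc matrix_transpose_mul)
  note h2 = h f5 f6 f7 f8 f5[THEN pre3] f6[THEN pre3] f7[THEN pre3] f8[THEN pre3]
  show "pinv (transpose D ** D) = P ** transpose P"
    by (rule pinv_eqI) (simp add: penrose_def matrix_mul_assoc matrix_transpose_mul h2)
  show "pinv (D ** transpose D) = transpose P ** P"
    by (rule pinv_eqI) (simp add: penrose_def matrix_mul_assoc matrix_transpose_mul h2)
  show "transpose D ** (transpose P ** P ** (transpose P ** P)) ** D = P ** transpose P"
    by (simp add: matrix_mul_assoc matrix_transpose_mul h2)
qed


lemma mult_delta1: "(a::real) * (if P then 1 else 0) = (if P then a else 0)"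
  by simp

lemma dtilde_ind:
  fixes src tgt :: "'e::finite \<Rightarrow> 'v::finite"
  shows "dtilde src tgt w *v ind e = sqrt (w e) *\<^sub>R (ind (src e) - ind (tgt e))"
proof -
  have W: "wdiag_sqrt w *v ind e = sqrt (w e) *\<^sub>R ind e"
    by (simp add: vec_eq_iff matrix_vector_mult_def wdiag_sqrt_def ind_def axis_def mult_delta1)
  have B: "boundary src tgt *v ind e = ind (src e) - ind (tgt e)"
    by (simp add: vec_eq_iff matrix_vector_mult_def boundary_def ind_def axis_def mult_delta1)
  show ?thesis
    by (simp add: dtilde_def matrix_vector_mul_assoc[symmetric] W B matrix_vector_mult_scaleR)
qed

lemma quad_transpose:
  fixes A :: "real^'n^'m" and M :: "real^'m^'m"
  shows "inner (A *v x) (M *v (A *v x)) = inner x ((transpose A ** M ** A) *v x)"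
  by (simp add: inner_mv_transpose matrix_vector_mul_assoc matrix_mul_assoc)

lemma inner_axis_diag:
  fixes N :: "real^'n^'n"
  shows "inner (ind e) (N *v ind e) = N $ e $ e"
  unfolding ind_def inner_axis' by (simp add: matrix_vector_mult_def axis_def mult_delta1)

lemma ppt_diag:
  fixes P :: "real^'v^'e"
  shows "(P ** transpose P) $ e $ e = (norm (P $ e))\<^sup>2"
  by (simp add: matrix_matrix_mult_def transpose_def power2_norm_eq_inner inner_vec_def)


theorem theorem3p1:
  fixes src tgt :: "'e::finite \<Rightarrow> 'v::finite" and w :: "'e \<Rightarrow> real" and e :: 'e
  assumes "\<And>f. src f \<noteq> tgt f"
    and "\<And>f. w f > 0"
  shows "w e * (biharmonic src tgt w (src e) (tgt e))\<^sup>2 = pinv (down_laplacian src tgt w) $ e $ e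
       \<and> pinv (down_laplacian src tgt w) $ e $ e = (norm (pinv (dtilde src tgt w) $ e))\<^sup>2"
proof -
  define D where "D = dtilde src tgt w"
  define P where "P = pinv D"
  define d where "d = ind (src e) - ind (tgt e)"
  have we: "w e > 0" using assms(2) by blast
  have DL: "pinv (down_laplacian src tgt w) = P ** transpose P"
    unfolding down_laplacian_def D_def[symmetric] P_def by (rule pinv_facts(1))
  have LL: "pinv (laplacian src tgt w) = transpose P ** P"
    unfolding laplacian_def D_def[symmetric] P_def by (rule pinv_facts(2))
  have De: "D *v ind e = sqrt (w e) *\<^sub>R d" unfolding D_def d_def by (rule dtilde_ind)
  have dd: "d = (1 / sqrt (w e)) *\<^sub>R (D *v ind e)" using De we by simp
  define M where "M = transpose P ** P ** (transpose P ** P)"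
  have "inner d (M *v d) = (1 / sqrt (w e))\<^sup>2 * inner (D *v ind e) (M *v (D *v ind e))"
    unfolding dd by (simp add: matrix_vector_mult_scaleR power2_eq_square)
  also have "\<dots> = (1 / w e) * (P ** transpose P) $ e $ e"
    using we by (simp add: quad_transpose M_def P_def pinv_facts(3) inner_axis_diag power_divide)
  finally have q: "inner d (M *v d) = (1 / w e) * (norm (P $ e))\<^sup>2" by (simp add: ppt_diag)
  have B: "biharmonic src tgt w (src e) (tgt e) = sqrt ((1 / w e) * (norm (P $ e))\<^sup>2)"
    unfolding biharmonic_def Let_def LL d_def[symmetric] M_def[symmetric] q ..
  have "w e * (biharmonic src tgt w (src e) (tgt e))\<^sup>2 = (norm (P $ e))\<^sup>2"
    unfolding B using we by simp
  then show ?thesis unfolding DL ppt_diag P_def D_def by simp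
qed

end
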